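(* Let $G$ be a graph on $n$ vertices with degrees $d_1,\ldots,d_n$, let $\overline{G}$ be its complement with signless Laplacian eigenvalues $\overline{q}_1\ge\cdots\ge\overline{q}_n$, and let $t\ge 1$ be an integer. Then the signless Laplacian eigenvalues of $\overline{G^{(t)}}$ (the complement of the blow-up $G^{(t)}$), listed with multiplicity (a total of $tn$ values), are $t\overline{q}_1+2(t-1),\ldots,t\overline{q}_n+2(t-1)$ together with $tn-td_1-2,\ldots,tn-td_n-2$, where each $tn-td_i-2$ ($i=1,\ldots,n$) is taken with multiplicity $t-1$.
   Context: All graphs are simple and undirected; $\overline{H}$ denotes the complement of a graph $H$. For a graph $H$, $A(H)$ is its adjacency matrix, $D(H)$ the diagonal matrix of its vertex degrees, and $Q(H)=D(H)+A(H)$ its signless Laplacian matrix; signless Laplacian eigenvalues are the eigenvalues of $Q(H)$. For a graph $G$ and an integer $t\ge 1$, the blow-up $G^{(t)}$ is the graph obtained by replacing each vertex $u$ of $G$ by a set $V_u$ of $t$ pairwise nonadjacent vertices, and each edge $\{u,v\}$ of $G$ by a complete bipartite graph with parts $V_u$ and $V_v$ (so $A(G^{(t)})=A(G)\otimes J_t$, with $J_t$ the $t\times t$ all-ones matrix). *)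

theory Defs
  imports "Jordan_Normal_Form.Char_Poly"
begin

definition simple_graph :: "nat \<Rightarrow> (nat \<Rightarrow> nat \<Rightarrow> bool) \<Rightarrow> bool" where
  "simple_graph n E \<longleftrightarrow> (\<forall>i<n. \<forall>j<n. E i j = E j i) \<and> (\<forall>i<n. \<not> E i i)"

definition adj_mat :: "nat \<Rightarrow> (nat \<Rightarrow> nat \<Rightarrow> bool) \<Rightarrow> real mat" where
  "adj_mat n E = mat n n (\<lambda>(i,j). if E i j then 1 else 0)"

definition degree :: "nat \<Rightarrow> (nat \<Rightarrow> nat \<Rightarrow> bool) \<Rightarrow> nat \<Rightarrow> nat" where
  "degree n E i = card {j. j < n \<and> E i j}"

definition deg_mat :: "nat \<Rightarrow> (nat \<Rightarrow> nat \<Rightarrow> bool) \<Rightarrow> real mat" where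
  "deg_mat n E = mat n n (\<lambda>(i,j). if i = j then real (degree n E i) else 0)"

definition signless_laplacian :: "nat \<Rightarrow> (nat \<Rightarrow> nat \<Rightarrow> bool) \<Rightarrow> real mat" where
  "signless_laplacian n E = deg_mat n E + adj_mat n E"

definition complement :: "(nat \<Rightarrow> nat \<Rightarrow> bool) \<Rightarrow> nat \<Rightarrow> nat \<Rightarrow> bool" where
  "complement E i j \<longleftrightarrow> i \<noteq> j \<and> \<not> E i j"

(* blow-up G^(t) on vertex set {0..<t*n}: vertex i lies in class V_(i div t);
   adjacency matrix A(G) \<otimes> J_t *)
definition blowup :: "nat \<Rightarrow> (nat \<Rightarrow> nat \<Rightarrow> bool) \<Rightarrow> nat \<Rightarrow> nat \<Rightarrow> bool" where
  "blowup t E i j \<longleftrightarrow> E (i div t) (j div t)"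

end

theory Submission
  imports Defs "Jordan_Normal_Form.Schur_Decomposition"
begin

lemma sum_block1: fixes g :: "nat \<Rightarrow> real" shows "sum g {v*t..<v*t+t} = (\<Sum>a<t. (g (v*t+a) :: real))"
  using sum.atLeastLessThan_shift_bounds[of g 0 "v*t" t]
  by (simp add: atLeast0LessThan comp_def add.commute)
lemma sum_blocks: fixes g :: "nat \<Rightarrow> real" shows "(\<Sum>j<t*n. g j) = (\<Sum>v<n. \<Sum>a<t. (g (v*t+a) :: real))"
  using sum.nat_group[of g t n] by (simp add: sum_block1 mult.commute)
lemma prod_mod: fixes g :: "nat \<Rightarrow> real poly" shows "(\<Prod>k<m*n. g (k mod n)) = (\<Prod>u<n. (g u :: real poly))^m"
proof (induction m)
  case 0 then show ?case by simp
next
  case (Suc m)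
  have "(\<Prod>k<Suc m*n. g (k mod n)) = (\<Prod>k<m*n. g (k mod n)) * (\<Prod>k\<in>{m*n..<m*n+n}. g (k mod n))"
    by (simp add: prod.atLeastLessThan_concat[symmetric] atLeast0LessThan[symmetric] add.commute)
  also have "(\<Prod>k\<in>{m*n..<m*n+n}. g (k mod n)) = (\<Prod>u<n. g u)"
    using prod.atLeastLessThan_shift_bounds[of "\<lambda>k. g (k mod n)" 0 "m*n" n]
    by (simp add: atLeast0LessThan comp_def add.commute)
  finally show ?case using Suc by simp
qed



lemma sl_idx: "i < m \<Longrightarrow> j < m \<Longrightarrow> signless_laplacian m G $$ (i,j) =
  (if i = j then real (degree m G i) + (if G i i then 1 else 0) else (if G i j then 1 else 0))"
  by (simp add: signless_laplacian_def deg_mat_def adj_mat_def)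

lemma sl_carrier[simp]: "signless_laplacian m G \<in> carrier_mat m m"
  by (simp add: signless_laplacian_def deg_mat_def adj_mat_def)

lemma card_sum: fixes m :: nat shows "real (card {j. j < m \<and> P j}) = (\<Sum>j<m. if P j then 1 else 0)"
proof -
  have "{j. j < m \<and> P j} = {j \<in> {..<m}. P j}" by auto
  moreover have "real (card {j \<in> {..<m}. P j}) = (\<Sum>j\<in>{j \<in> {..<m}. P j}. 1)" by (rule real_of_card)
  moreover have "(\<Sum>j\<in>{j \<in> {..<m}. P j}. (1::real)) = (\<Sum>j<m. if P j then 1 else 0)"
    by (rule sum.inter_filter) (rule finite_lessThan)
  ultimately show ?thesis by simp
qed

lemma delta_sum1: fixes N :: nat assumes "x < N" shows "(\<Sum>i<N. (if i = x then 1 else 0) * (g i::real)) = g x"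
proof -
  have "(\<Sum>i<N. (if i = x then 1 else 0) * g i) = (\<Sum>i<N. if i = x then g x else 0)" by (rule sum.cong) auto
  also have "\<dots> = g x" using assms by simp
  finally show ?thesis .
qed

lemma delta_sum2: fixes N :: nat assumes "x < N" shows "(\<Sum>i<N. (g i::real) * (if i = x then 1 else 0)) = g x"
proof -
  have "(\<Sum>i<N. g i * (if i = x then 1 else 0)) = (\<Sum>i<N. if i = x then g x else 0)" by (rule sum.cong) auto
  also have "\<dots> = g x" using assms by simp
  finally show ?thesis .
qed

lemma divt[simp]: "a < (t::nat) \<Longrightarrow> (v * t + a) div t = v"
  by simp
lemma modt[simp]: "a < (t::nat) \<Longrightarrow> (v * t + a) mod t = a"
  by simp

lemma block_sum: fixes g :: "nat \<Rightarrow> real" assumes "c < n"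
  shows "(\<Sum>i<t*n. (if i div t = c then 1 else 0) * g i) = (\<Sum>a<t. g (c*t+a))"
proof -
  have "(\<Sum>i<t*n. (if i div t = c then 1 else 0) * g i) = (\<Sum>v<n. \<Sum>a<t. (if (v*t+a) div t = c then 1 else 0) * g (v*t+a))"
    by (rule sum_blocks)
  also have "\<dots> = (\<Sum>v<n. \<Sum>a<t. (if v = c then 1 else 0) * g (v*t+a))"
    by (intro sum.cong refl) simp
  also have "\<dots> = (\<Sum>v<n. (if v = c then 1 else 0) * (\<Sum>a<t. g (v*t+a)))"
    by (rule sum.cong[OF refl], rule sum_distrib_left[symmetric])
  also have "\<dots> = (\<Sum>a<t. g (c*t+a))" by (rule delta_sum1[OF assms])
  finally show ?thesis .
qed

lemma block_sum2: fixes g :: "nat \<Rightarrow> real" assumes "c < n"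
  shows "(\<Sum>i<t*n. g i * (if i div t = c then 1 else 0)) = (\<Sum>a<t. g (c*t+a))"
  using block_sum[OF assms, of t g] by (simp add: mult.commute)

lemma count_block: assumes "c < n" shows "(\<Sum>i<t*n. (if i div t = c then 1 else 0)) = (real t)"
  using block_sum[OF assms, of t "\<lambda>_. 1"] by simp




lemma deg_sum: "real (degree m G i) = (\<Sum>j<m. if G i j then 1 else 0)"
  unfolding degree_def by (rule card_sum)

lemma deg_compl: assumes irr: "\<not> E u u" and u: "u < n"
  shows "real (degree n (complement E) u) = real n - 1 - real (degree n E u)"
proof -
  have "real (degree n (complement E) u) = (\<Sum>v<n. if u \<noteq> v \<and> \<not> E u v then 1 else 0)"
    unfolding deg_sum complement_def ..
  also have "\<dots> = (\<Sum>v<n. 1 - (if v = u then 1 else 0) - (if E u v then 1 else 0))"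
    by (rule sum.cong[OF refl]) (use irr in auto)
  also have "\<dots> = real n - 1 - (\<Sum>v<n. if E u v then 1 else 0)"
    using u by (simp add: sum_subtractf)
  finally show ?thesis unfolding deg_sum .
qed

lemma deg_blow: assumes irr: "\<not> E (i div t) (i div t)" and i: "i < t * n"
  shows "real (degree (t*n) (complement (blowup t E)) i) =
    real t * real (degree n (complement E) (i div t)) + (real t - 1)"
proof -
  define u where "u = i div t"
  define b where "b = i mod t"
  have t0: "t > 0" using i by (cases t) auto
  have un: "u < n" using i unfolding u_def by (simp add: less_mult_imp_div_less mult.commute)
  have bt: "b < t" unfolding b_def using t0 by simp
  have ieq: "i = u * t + b" unfolding u_def b_def by simp
  have irr': "\<not> E u u" using irr unfolding u_def .
  have "real (degree (t*n) (complement (blowup t E)) i) =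
     (\<Sum>j<t*n. if i \<noteq> j \<and> \<not> E u (j div t) then 1 else 0)"
    unfolding deg_sum complement_def blowup_def u_def ..
  also have "\<dots> = (\<Sum>v<n. \<Sum>a<t. if i \<noteq> v*t+a \<and> \<not> E u ((v*t+a) div t) then 1 else 0)"
    by (rule sum_blocks)
  also have "\<dots> = (\<Sum>v<n. (if v = u then real t - 1 else 0) + real t * (if u \<noteq> v \<and> \<not> E u v then 1 else 0))"
  proof (rule sum.cong[OF refl])
    fix v assume "v \<in> {..<n}"
    show "(\<Sum>a<t. if i \<noteq> v*t+a \<and> \<not> E u ((v*t+a) div t) then 1 else 0) =
      (if v = u then real t - 1 else 0) + real t * (if u \<noteq> v \<and> \<not> E u v then 1 else 0)"
    proof (cases "v = u")
      case True
      have "(\<Sum>a<t. if i \<noteq> v*t+a \<and> \<not> E u ((v*t+a) div t) then 1 else 0) =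
            (\<Sum>a<t. 1 - (if a = b then 1 else (0::real)))"
      proof (rule sum.cong[OF refl])
        fix a assume a: "a \<in> {..<t}"
        then have d: "(v*t+a) div t = u" using True by simp
        have "(i \<noteq> v*t+a) = (a \<noteq> b)" using ieq True by auto
        then show "(if i \<noteq> v*t+a \<and> \<not> E u ((v*t+a) div t) then 1 else 0) = 1 - (if a = b then 1 else (0::real))"
          using d irr' by simp
      qed
      also have "\<dots> = real t - 1" using bt by (simp add: sum_subtractf)
      finally show ?thesis using True by simp
    next
      case False
      have "(\<Sum>a<t. if i \<noteq> v*t+a \<and> \<not> E u ((v*t+a) div t) then 1 else 0) =
            (\<Sum>a<t. if \<not> E u v then 1 else (0::real))"
      proof (rule sum.cong[OF refl])
        fix a assume a: "a \<in> {..<t}"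
        then have "(v*t+a) div t = v" by simp
        moreover have "i \<noteq> v*t+a" using False \<open>(v*t+a) div t = v\<close> unfolding u_def by auto
        ultimately show "(if i \<noteq> v*t+a \<and> \<not> E u ((v*t+a) div t) then 1 else 0) = (if \<not> E u v then 1 else (0::real))"
          by simp
      qed
      then show ?thesis using False by simp
    qed
  qed
  also have "\<dots> = (real t - 1) + real t * (\<Sum>v<n. if u \<noteq> v \<and> \<not> E u v then 1 else 0)"
    using un by (simp add: sum.distrib sum_distrib_left)
  also have "\<dots> = real t * real (degree n (complement E) u) + (real t - 1)"
    unfolding deg_sum complement_def by simp
  finally show ?thesis unfolding u_def .
qed




definition uc :: "nat \<Rightarrow> nat \<Rightarrow> nat" where "uc n c = (c - n) mod n"
definition ac :: "nat \<Rightarrow> nat \<Rightarrow> nat" where "ac n c = (c - n) div n + 1"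

lemma uc_ac: assumes "n \<le> c" "c < t * n"
  shows "uc n c < n" "0 < ac n c" "ac n c < t"
proof -
  have n0: "n > 0" using assms by (cases n) auto
  show "uc n c < n" unfolding uc_def using n0 by simp
  show "0 < ac n c" unfolding ac_def by simp
  have t1: "t \<ge> 1" using assms by (cases t) auto
  have "c - n < (t - 1) * n" using assms t1 by (simp add: diff_mult_distrib)
  then have "(c - n) div n < t - 1" using n0 by (simp add: div_less_iff_less_mult)
  then show "ac n c < t" unfolding ac_def by simp
qed

lemma uc_ac_inj: assumes "n \<le> c" "n \<le> d" "uc n c = uc n d" "ac n c = ac n d"
  shows "c = d"
proof -
  have m: "(c-n) mod n = (d-n) mod n" using assms(3) unfolding uc_def .
  have q: "(c-n) div n = (d-n) div n" using assms(4) unfolding ac_def by simp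
  have "c - n = (c-n) div n * n + (c-n) mod n" by simp
  also have "\<dots> = (d-n) div n * n + (d-n) mod n" using m q by simp
  also have "\<dots> = d - n" by simp
  finally show ?thesis using assms(1,2) by simp
qed

lemma blk_eq: fixes t :: nat assumes "a < t" "b < t" shows "(d * t + a = u * t + b) = (d = u \<and> a = b)"
proof
  assume h: "d * t + a = u * t + b"
  have "d = (d * t + a) div t" using assms by simp
  also have "\<dots> = (u*t+b) div t" using h by simp
  also have "\<dots> = u" using assms by simp
  finally have du: "d = u" .
  have "a = (d * t + a) mod t" using assms by simp
  also have "\<dots> = (u*t+b) mod t" using h by simp
  also have "\<dots> = b" using assms by simp
  finally show "d = u \<and> a = b" using du by simp
qed auto

definition Pm :: "nat \<Rightarrow> nat \<Rightarrow> real mat" where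
 "Pm t n = mat (t*n) (t*n) (\<lambda>(i,c). if c < n then (if i div t = c then 1 else 0)
     else (if i = uc n c * t then 1 else 0) - (if i = uc n c * t + ac n c then 1 else 0))"

definition Pinv :: "nat \<Rightarrow> nat \<Rightarrow> real mat" where
 "Pinv t n = mat (t*n) (t*n) (\<lambda>(c,i). if c < n then (if i div t = c then 1 else 0) / real t
     else (if i div t = uc n c then 1 else 0) / real t - (if i = uc n c * t + ac n c then 1 else 0))"

lemma Pm_carrier[simp]: "Pm t n \<in> carrier_mat (t*n) (t*n)" unfolding Pm_def by simp
lemma Pinv_carrier[simp]: "Pinv t n \<in> carrier_mat (t*n) (t*n)" unfolding Pinv_def by simp
lemma Pm_dim[simp]: "dim_row (Pm t n) = t*n" "dim_col (Pm t n) = t*n" unfolding Pm_def by simp_all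
lemma Pinv_dim[simp]: "dim_row (Pinv t n) = t*n" "dim_col (Pinv t n) = t*n" unfolding Pinv_def by simp_all

lemma col_hi: fixes f :: "nat \<Rightarrow> real" and N :: nat assumes "x < N" "y < N"
  shows "(\<Sum>i<N. f i * ((if i = x then 1 else 0) - (if i = y then 1 else 0))) = f x - f y"
proof -
  have "(\<Sum>i<N. f i * ((if i = x then 1 else 0) - (if i = y then 1 else 0))) =
    (\<Sum>i<N. f i * (if i = x then 1 else 0)) - (\<Sum>i<N. f i * (if i = y then 1 else 0))"
    by (simp only: right_diff_distrib sum_subtractf)
  also have "\<dots> = f x - f y" using assms by (simp only: delta_sum2)
  finally show ?thesis .
qed

lemma Pm_idx: "i < t*n \<Longrightarrow> c < t*n \<Longrightarrow> Pm t n $$ (i,c) = (if c < n then (if i div t = c then 1 else 0)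
     else (if i = uc n c * t then 1 else 0) - (if i = uc n c * t + ac n c then 1 else 0))"
  unfolding Pm_def by simp

lemma Pinv_idx: "c < t*n \<Longrightarrow> i < t*n \<Longrightarrow> Pinv t n $$ (c,i) = (if c < n then (if i div t = c then 1 else 0) / real t
     else (if i div t = uc n c then 1 else 0) / real t - (if i = uc n c * t + ac n c then 1 else 0))"
  unfolding Pinv_def by simp

lemma mult_idx: fixes A B :: "real mat"
  assumes "A \<in> carrier_mat a b" "B \<in> carrier_mat b e" "i < a" "j < e"
  shows "(A*B)$$(i,j) = (\<Sum>k<b. A$$(i,k) * B$$(k,j))"
  using assms by (simp add: scalar_prod_def atLeast0LessThan row_def col_def)

lemma mult_entry_lo: fixes A :: "real mat"
  assumes A: "A \<in> carrier_mat N (t*n)" and c: "c < N" and d: "d < n" and t: "t > 0"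
  shows "(A * Pm t n) $$ (c,d) = (\<Sum>a<t. A $$ (c, d*t+a))"
proof -
  have "n \<le> t * n" using t by simp
  then have dn: "d < t * n" using d by linarith
  have "(A * Pm t n) $$ (c,d) = (\<Sum>i<t*n. A $$ (c,i) * Pm t n $$ (i,d))"
    by (rule mult_idx[OF A Pm_carrier c dn])
  also have "\<dots> = (\<Sum>i<t*n. A $$ (c,i) * (if i div t = d then 1 else 0))"
    by (rule sum.cong[OF refl]) (use dn d in \<open>simp add: Pm_idx\<close>)
  also have "\<dots> = (\<Sum>a<t. A $$ (c, d*t+a))" by (rule block_sum2[OF d])
  finally show ?thesis .
qed


lemma blk_lt: fixes t :: nat assumes "a < t" "d < n" shows "d*t+a < t*n"
proof -
  have "d * t + a < d * t + t" using assms by simp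
  also have "\<dots> = (d + 1) * t" by simp
  also have "\<dots> \<le> n * t" using assms by (intro mult_le_mono1) simp
  finally show ?thesis by (simp add: mult.commute)
qed

lemma pos_lt: assumes "n \<le> d" "d < t*n" shows "uc n d * t < t*n" "uc n d * t + ac n d < t*n"
    "(uc n d * t) div t = uc n d" "(uc n d * t + ac n d) div t = uc n d"
proof -
  note u = uc_ac[OF assms]
  have "uc n d * t + ac n d < uc n d * t + t" using u by simp
  also have "\<dots> = (uc n d + 1) * t" by simp
  also have "\<dots> \<le> n * t" using u by (intro mult_le_mono1) simp
  finally show "uc n d * t + ac n d < t*n" by (simp add: mult.commute)
  then show "uc n d * t < t*n" by linarith
  show "(uc n d * t) div t = uc n d" using u by simp
  show "(uc n d * t + ac n d) div t = uc n d" using u by simp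
qed

lemma mult_entry_hi: fixes A :: "real mat"
  assumes A: "A \<in> carrier_mat N (t*n)" and c: "c < N" and d: "n \<le> d" "d < t*n"
  shows "(A * Pm t n) $$ (c,d) = A $$ (c, uc n d * t) - A $$ (c, uc n d * t + ac n d)"
proof -
  note p = pos_lt[OF d]
  have "(A * Pm t n) $$ (c,d) = (\<Sum>i<t*n. A $$ (c,i) * Pm t n $$ (i,d))"
    by (rule mult_idx[OF A Pm_carrier c d(2)])
  also have "\<dots> = (\<Sum>i<t*n. A $$ (c,i) * ((if i = uc n d * t then 1 else 0) - (if i = uc n d * t + ac n d then 1 else 0)))"
  proof (rule sum.cong[OF refl])
    fix i assume i: "i \<in> {..<t*n}"
    have "t > 0" using d by (cases t) auto
    then show "A $$ (c,i) * Pm t n $$ (i,d) = A $$ (c,i) * ((if i = uc n d * t then 1 else 0) - (if i = uc n d * t + ac n d then 1 else 0))"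
      using i d by (simp add: Pm_idx)
  qed
  also have "\<dots> = A $$ (c, uc n d * t) - A $$ (c, uc n d * t + ac n d)"
    by (rule col_hi[OF p(1,2)])
  finally show ?thesis .
qed



lemma Pinv_P: assumes t: "t > 0" shows "Pinv t n * Pm t n = 1\<^sub>m (t*n)"
proof (rule eq_matI)
  show "dim_row (Pinv t n * Pm t n) = dim_row (1\<^sub>m (t*n))" by simp
  show "dim_col (Pinv t n * Pm t n) = dim_col (1\<^sub>m (t*n))" by simp
  fix c d assume "c < dim_row (1\<^sub>m (t*n))" "d < dim_col (1\<^sub>m (t*n))"
  then have c: "c < t*n" and d: "d < t*n" by auto
  show "(Pinv t n * Pm t n) $$ (c,d) = 1\<^sub>m (t*n) $$ (c,d)"
  proof (cases "d < n")
    case dn: True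
    have "(Pinv t n * Pm t n) $$ (c,d) = (\<Sum>a<t. Pinv t n $$ (c, d*t+a))"
      by (rule mult_entry_lo[OF Pinv_carrier c dn t])
    also have "\<dots> = (if c = d then 1 else 0)"
    proof (cases "c < n")
      case True
      have "(\<Sum>a<t. Pinv t n $$ (c, d*t+a)) = (\<Sum>a<t. (if d = c then 1 else 0) / real t)"
      proof (rule sum.cong[OF refl])
        fix a assume a: "a \<in> {..<t}"
        have "d*t+a < t*n" using a dn by (simp add: blk_lt)
        then show "Pinv t n $$ (c, d*t+a) = (if d = c then 1 else 0) / real t"
          using a True c by (simp add: Pinv_idx)
      qed
      also have "\<dots> = (if c = d then 1 else 0)" by (cases "c = d") (use t in simp_all)
      finally show ?thesis .
    next
      case False
      note u = uc_ac[OF leI[OF False] c]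
      have "(\<Sum>a<t. Pinv t n $$ (c, d*t+a)) = (\<Sum>a<t. (if d = uc n c then 1 else 0) / real t
          - (if d = uc n c then (if a = ac n c then 1 else 0) else 0))"
      proof (rule sum.cong[OF refl])
        fix a assume a: "a \<in> {..<t}"
        have "d*t+a < t*n" using a dn by (simp add: blk_lt)
        moreover have "(d*t+a = uc n c * t + ac n c) = (d = uc n c \<and> a = ac n c)"
          using a u by (intro blk_eq) auto
        ultimately show "Pinv t n $$ (c, d*t+a) = (if d = uc n c then 1 else 0) / real t
          - (if d = uc n c then (if a = ac n c then 1 else 0) else 0)"
          using a False c by (simp add: Pinv_idx)
      qed
      also have "\<dots> = (if d = uc n c then 1 else 0) - (if d = uc n c then 1 else 0)"
        by (cases "d = uc n c") (use t u in \<open>simp_all add: sum_subtractf\<close>)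
      also have "\<dots> = (if c = d then 1 else 0)" using False dn by simp
      finally show ?thesis .
    qed
    finally show ?thesis using c d by simp
  next
    case dn: False
    note p = pos_lt[OF leI[OF dn] d]
    note ud = uc_ac[OF leI[OF dn] d]
    have "(Pinv t n * Pm t n) $$ (c,d) = Pinv t n $$ (c, uc n d * t) - Pinv t n $$ (c, uc n d * t + ac n d)"
      by (rule mult_entry_hi[OF Pinv_carrier c leI[OF dn] d])
    also have "\<dots> = (if c = d then 1 else 0)"
    proof (cases "c < n")
      case True
      then show ?thesis using p c dn True by (simp add: Pinv_idx)
    next
      case False
      note uc = uc_ac[OF leI[OF False] c]
      have "(uc n d * t + 0 = uc n c * t + ac n c) = (uc n d = uc n c \<and> 0 = ac n c)"
        by (rule blk_eq) (use t uc in auto)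
      then have ne: "uc n d * t \<noteq> uc n c * t + ac n c" using uc by simp
      have "(uc n d * t + ac n d = uc n c * t + ac n c) = (uc n d = uc n c \<and> ac n d = ac n c)"
        by (rule blk_eq) (use uc ud in auto)
      also have "\<dots> = (c = d)"
      proof
        assume "uc n d = uc n c \<and> ac n d = ac n c"
        then show "c = d" using uc_ac_inj[of n c d] False dn by simp
      qed simp
      finally have eq: "(uc n d * t + ac n d = uc n c * t + ac n c) = (c = d)" .
      show ?thesis using p c False ne eq by (simp add: Pinv_idx)
    qed
    finally show ?thesis using c d by simp
  qed
qed


lemma P_Pinv: assumes t: "t > 0" shows "Pm t n * Pinv t n = 1\<^sub>m (t*n)"
  using mat_mult_left_right_inverse[OF Pinv_carrier Pm_carrier Pinv_P[OF t]] .




definition fD :: "nat \<Rightarrow> nat \<Rightarrow> (nat \<Rightarrow> nat \<Rightarrow> bool) \<Rightarrow> nat \<Rightarrow> real" where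
  "fD t n E u = real t * real n - real t * real (degree n E u) - 2"

definition Bm :: "nat \<Rightarrow> nat \<Rightarrow> (nat \<Rightarrow> nat \<Rightarrow> bool) \<Rightarrow> real mat" where
  "Bm t n E = real t \<cdot>\<^sub>m signless_laplacian n (complement E) + (2 * (real t - 1)) \<cdot>\<^sub>m 1\<^sub>m n"

definition Dm :: "nat \<Rightarrow> nat \<Rightarrow> (nat \<Rightarrow> nat \<Rightarrow> bool) \<Rightarrow> real mat" where
  "Dm t n E = mat ((t-1)*n) ((t-1)*n) (\<lambda>(k,l). if k = l then fD t n E (k mod n) else 0)"

definition Mm :: "nat \<Rightarrow> nat \<Rightarrow> (nat \<Rightarrow> nat \<Rightarrow> bool) \<Rightarrow> real mat" where
  "Mm t n E = four_block_mat (Bm t n E) (0\<^sub>m n ((t-1)*n)) (0\<^sub>m ((t-1)*n) n) (Dm t n E)"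

lemma Bm_carrier[simp]: "Bm t n E \<in> carrier_mat n n" unfolding Bm_def by simp
lemma Dm_carrier[simp]: "Dm t n E \<in> carrier_mat ((t-1)*n) ((t-1)*n)" unfolding Dm_def by simp

lemma tn_eq: fixes t n :: nat shows "t > 0 \<Longrightarrow> n + (t-1)*n = t*n"
  by (cases t) auto

lemma sl_dim[simp]: "dim_row (signless_laplacian m G) = m" "dim_col (signless_laplacian m G) = m"
  by (rule carrier_matD[OF sl_carrier])+
lemma Bm_dim[simp]: "dim_row (Bm t n E) = n" "dim_col (Bm t n E) = n" unfolding Bm_def by simp_all
lemma Dm_dim[simp]: "dim_row (Dm t n E) = (t-1)*n" "dim_col (Dm t n E) = (t-1)*n" unfolding Dm_def by simp_all

lemma Mm_carrier: "t > 0 \<Longrightarrow> Mm t n E \<in> carrier_mat (t*n) (t*n)"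
proof -
  assume t: "t > 0"
  have "Mm t n E \<in> carrier_mat (n + (t-1)*n) (n + (t-1)*n)" unfolding Mm_def
    by (rule four_block_carrier_mat[OF Bm_carrier Dm_carrier])
  then show ?thesis unfolding tn_eq[OF t] .
qed

lemma Mm_idx: assumes t: "t > 0" and d: "d < t*n" and c: "c < t*n"
  shows "Mm t n E $$ (d,c) = (if d < n then (if c < n then Bm t n E $$ (d,c) else 0)
     else (if c < n then 0 else (if d = c then fD t n E ((c - n) mod n) else 0)))"
proof -
  have d': "d < dim_row (Bm t n E) + dim_row (Dm t n E)" and c': "c < dim_col (Bm t n E) + dim_col (Dm t n E)"
    using d c tn_eq[OF t, of n] by auto
  show ?thesis unfolding Mm_def index_mat_four_block(1)[OF d' c'] using d c tn_eq[OF t, of n]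
    by (auto simp: Dm_def)
qed

lemma Bm_idx: "u < n \<Longrightarrow> v < n \<Longrightarrow> Bm t n E $$ (u,v) =
   real t * signless_laplacian n (complement E) $$ (u,v) + (if u = v then 2 * (real t - 1) else 0)"
  unfolding Bm_def by simp

lemma PM_lo: assumes t: "t > 0" and i: "i < t*n" and c: "c < n"
  shows "(Pm t n * Mm t n E) $$ (i,c) = Bm t n E $$ (i div t, c)"
proof -
  have "n \<le> t * n" using t by simp
  then have cN: "c < t*n" using c by linarith
  have u: "i div t < n" using i by (simp add: less_mult_imp_div_less mult.commute)
  have "(Pm t n * Mm t n E) $$ (i,c) = (\<Sum>d<t*n. Pm t n $$ (i,d) * Mm t n E $$ (d,c))"
    by (rule mult_idx[OF Pm_carrier Mm_carrier[OF t] i cN])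
  also have "\<dots> = (\<Sum>d<t*n. if d = i div t then Bm t n E $$ (i div t, c) else 0)"
  proof (rule sum.cong[OF refl])
    fix d assume "d \<in> {..<t*n}"
    then have d: "d < t*n" by simp
    show "Pm t n $$ (i,d) * Mm t n E $$ (d,c) = (if d = i div t then Bm t n E $$ (i div t, c) else 0)"
      using d c cN u i by (auto simp: Pm_idx Mm_idx[OF t d cN])
  qed
  also have "\<dots> = Bm t n E $$ (i div t, c)"
  proof -
    have "i div t < t*n" using u \<open>n \<le> t*n\<close> by linarith
    then show ?thesis by simp
  qed
  finally show ?thesis .
qed

lemma PM_hi: assumes t: "t > 0" and i: "i < t*n" and c: "n \<le> c" "c < t*n"
  shows "(Pm t n * Mm t n E) $$ (i,c) = Pm t n $$ (i,c) * fD t n E (uc n c)"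
proof -
  have "(Pm t n * Mm t n E) $$ (i,c) = (\<Sum>d<t*n. Pm t n $$ (i,d) * Mm t n E $$ (d,c))"
    by (rule mult_idx[OF Pm_carrier Mm_carrier[OF t] i c(2)])
  also have "\<dots> = (\<Sum>d<t*n. if d = c then Pm t n $$ (i,c) * fD t n E (uc n c) else 0)"
  proof (rule sum.cong[OF refl])
    fix d assume "d \<in> {..<t*n}"
    then have d: "d < t*n" by simp
    show "Pm t n $$ (i,d) * Mm t n E $$ (d,c) = (if d = c then Pm t n $$ (i,c) * fD t n E (uc n c) else 0)"
      using d c by (auto simp: Mm_idx[OF t d c(2)] uc_def)
  qed
  also have "\<dots> = Pm t n $$ (i,c) * fD t n E (uc n c)" using c by simp
  finally show ?thesis .
qed




lemma QB_idx: assumes irr: "\<forall>u<n. \<not> E u u" and t: "t > 0" and i: "i < t*n" and j: "j < t*n"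
  shows "signless_laplacian (t*n) (complement (blowup t E)) $$ (i,j) =
    (if i = j then real t * real (degree n (complement E) (i div t)) + (real t - 1)
     else if \<not> E (i div t) (j div t) then 1 else 0)"
proof -
  have u: "i div t < n" using i by (simp add: less_mult_imp_div_less mult.commute)
  have d: "real (degree (t*n) (complement (blowup t E)) i) = real t * real (degree n (complement E) (i div t)) + (real t - 1)"
    by (rule deg_blow) (use irr u i in auto)
  show ?thesis using i j d by (cases "i = j") (simp_all add: sl_idx complement_def blowup_def)
qed

lemma QP_eq: assumes irr: "\<forall>u<n. \<not> E u u" and t: "t > 0" and i: "i < t*n" and c: "c < t*n"
  shows "(signless_laplacian (t*n) (complement (blowup t E)) * Pm t n) $$ (i,c) = (Pm t n * Mm t n E) $$ (i,c)"
proof -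
  let ?Q = "signless_laplacian (t*n) (complement (blowup t E))"
  define u where "u = i div t"
  define b where "b = i mod t"
  define D where "D = real t * real (degree n (complement E) u) + (real t - 1)"
  have un: "u < n" using i unfolding u_def by (simp add: less_mult_imp_div_less mult.commute)
  have bt: "b < t" unfolding b_def using t by simp
  have ieq: "i = u * t + b" unfolding u_def b_def by simp
  have irru: "\<not> E u u" using irr un by simp
  have Qi: "?Q $$ (i,j) = (if i = j then D else if \<not> E u (j div t) then 1 else 0)" if j: "j < t*n" for j
    unfolding D_def u_def by (rule QB_idx[where n=n and E=E and t=t and i=i and j=j, OF irr t i j])
  show ?thesis
  proof (cases "c < n")
    case True
    have "(?Q * Pm t n) $$ (i,c) = (\<Sum>a<t. ?Q $$ (i, c*t+a))"
      by (rule mult_entry_lo[OF sl_carrier i True t])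
    also have "\<dots> = Bm t n E $$ (u, c)"
    proof (cases "c = u")
      case cu: True
      have "(\<Sum>a<t. ?Q $$ (i, c*t+a)) = (\<Sum>a<t. 1 + (if a = b then D - 1 else 0))"
      proof (rule sum.cong[OF refl])
        fix a assume a: "a \<in> {..<t}"
        then have lt: "c*t+a < t*n" using True by (simp add: blk_lt)
        have eq: "(i = c*t+a) = (a = b)" using ieq cu blk_eq[of b t a u u] bt a by auto
        have dv: "(c*t+a) div t = u" using a cu by simp
        show "?Q $$ (i, c*t+a) = 1 + (if a = b then D - 1 else 0)"
          using Qi[OF lt] eq dv irru by simp
      qed
      also have "\<dots> = real t + (D - 1)" using bt by (simp add: sum.distrib)
      also have "\<dots> = Bm t n E $$ (u, c)"
        using cu un by (simp add: Bm_idx sl_idx D_def complement_def)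
      finally show ?thesis .
    next
      case cu: False
      have "(\<Sum>a<t. ?Q $$ (i, c*t+a)) = (\<Sum>a<t. if \<not> E u c then 1 else 0)"
      proof (rule sum.cong[OF refl])
        fix a assume a: "a \<in> {..<t}"
        then have lt: "c*t+a < t*n" using True by (simp add: blk_lt)
        have dv: "(c*t+a) div t = c" using a by simp
        have ne: "i \<noteq> c*t+a" using dv cu unfolding u_def by auto
        show "?Q $$ (i, c*t+a) = (if \<not> E u c then 1 else 0)"
          using Qi[OF lt] ne dv by simp
      qed
      also have "\<dots> = Bm t n E $$ (u, c)"
        using cu un True by (simp add: Bm_idx sl_idx complement_def)
      finally show ?thesis .
    qed
    also have "\<dots> = (Pm t n * Mm t n E) $$ (i,c)"
      unfolding u_def by (rule PM_lo[OF t i True, symmetric])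
    finally show ?thesis .
  next
    case False
    then have cn: "n \<le> c" by simp
    note p = pos_lt[OF cn c]
    note uac = uc_ac[OF cn c]
    have "(?Q * Pm t n) $$ (i,c) = ?Q $$ (i, uc n c * t) - ?Q $$ (i, uc n c * t + ac n c)"
      by (rule mult_entry_hi[OF sl_carrier i cn c])
    also have "\<dots> = Pm t n $$ (i,c) * fD t n E (uc n c)"
    proof (cases "u = uc n c")
      case True
      have e1: "(i = uc n c * t) = (b = 0)" using ieq True blk_eq[of b t 0 u u] bt t by auto
      have e2: "(i = uc n c * t + ac n c) = (b = ac n c)" using ieq True blk_eq[of b t "ac n c" u u] bt uac by auto
      have pm: "Pm t n $$ (i,c) = (if b = 0 then 1 else 0) - (if b = ac n c then 1 else 0)"
        using e1 e2 False i c by (simp add: Pm_idx)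
      have fd: "fD t n E (uc n c) = D - 1"
      proof -
        have dc: "real (degree n (complement E) u) = real n - 1 - real (degree n E u)"
          by (rule deg_compl[where E=E and u=u and n=n, OF irru un])
        show ?thesis unfolding fD_def D_def True[symmetric] dc by (simp add: algebra_simps)
      qed
      have "?Q $$ (i, uc n c * t) - ?Q $$ (i, uc n c * t + ac n c) =
         (if b = 0 then D else 1) - (if b = ac n c then D else 1)"
        using Qi[OF p(1)] Qi[OF p(2)] e1 e2 p(3,4) True irru by simp
      also have "\<dots> = Pm t n $$ (i,c) * fD t n E (uc n c)"
        unfolding pm fd using uac by auto
      finally show ?thesis .
    next
      case ne: False
      have e1: "i \<noteq> uc n c * t" using ne p(3) unfolding u_def by auto
      have e2: "i \<noteq> uc n c * t + ac n c" using ne p(4) unfolding u_def by auto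
      have "?Q $$ (i, uc n c * t) - ?Q $$ (i, uc n c * t + ac n c) = 0"
        using Qi[OF p(1)] Qi[OF p(2)] e1 e2 p(3,4) by simp
      also have "\<dots> = Pm t n $$ (i,c) * fD t n E (uc n c)"
        using e1 e2 False i c by (simp add: Pm_idx)
      finally show ?thesis .
    qed
    also have "\<dots> = (Pm t n * Mm t n E) $$ (i,c)"
      by (rule PM_hi[OF t i cn c, symmetric])
    finally show ?thesis .
  qed
qed




lemma prod_list_upt: "prod_list (map f [0..<n]) = (\<Prod>i<n. (f i :: 'a :: comm_monoid_mult))"
  by (induction n) (simp_all add: mult.commute)

lemma sim_QM: assumes irr: "\<forall>u<n. \<not> E u u" and t: "t > 0"
  shows "similar_mat (signless_laplacian (t*n) (complement (blowup t E))) (Mm t n E)"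
proof -
  let ?Q = "signless_laplacian (t*n) (complement (blowup t E))"
  have QP: "?Q * Pm t n = Pm t n * Mm t n E"
  proof (rule eq_matI)
    fix i c assume "i < dim_row (Pm t n * Mm t n E)" "c < dim_col (Pm t n * Mm t n E)"
    then have i: "i < t*n" and c: "c < t*n" using Mm_carrier[OF t, of n E] by auto
    show "(?Q * Pm t n) $$ (i,c) = (Pm t n * Mm t n E) $$ (i,c)" by (rule QP_eq[where n=n and E=E and t=t and i=i and c=c, OF irr t i c])
  qed (use Mm_carrier[OF t, of n E] in auto)
  have "?Q = ?Q * (Pm t n * Pinv t n)" using P_Pinv[OF t] by simp
  also have "\<dots> = (?Q * Pm t n) * Pinv t n"
    by (rule assoc_mult_mat[OF sl_carrier Pm_carrier Pinv_carrier, symmetric])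
  also have "\<dots> = Pm t n * Mm t n E * Pinv t n" unfolding QP ..
  finally have eq: "?Q = Pm t n * Mm t n E * Pinv t n" .
  show ?thesis
    by (rule similar_matI[of _ _ "Pm t n" "Pinv t n" "t*n"])
       (use eq P_Pinv[OF t] Pinv_P[OF t] Mm_carrier[OF t, of n E] in auto)
qed

lemma cp_Dm: "char_poly (Dm t n E) = (\<Prod>k<(t-1)*n. [:- fD t n E (k mod n), 1:])"
proof -
  have ut: "upper_triangular (Dm t n E)" unfolding upper_triangular_def Dm_def by auto
  have "char_poly (Dm t n E) = (\<Prod>a\<leftarrow>diag_mat (Dm t n E). [:- a, 1:])"
    by (rule char_poly_upper_triangular[OF Dm_carrier ut])
  also have "diag_mat (Dm t n E) = map (\<lambda>k. fD t n E (k mod n)) [0..<(t-1)*n]"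
    unfolding diag_mat_def by (simp add: Dm_def)
  finally show ?thesis by (simp add: prod_list_upt o_def)
qed

lemma cp_Bm: fixes qbar :: "nat \<Rightarrow> real"
  assumes cp: "char_poly (signless_laplacian n (complement E)) = (\<Prod>i<n. [:- qbar i, 1:])"
  shows "char_poly (Bm t n E) = (\<Prod>i<n. [:- (real t * qbar i + 2 * (real t - 1)), 1:])"
proof -
  let ?Qb = "signless_laplacian n (complement E)"
  let ?es = "map qbar [0..<n]"
  let ?c = "2 * (real t - 1)"
  have cp': "char_poly ?Qb = (\<Prod>e\<leftarrow>?es. [:- e, 1:])" unfolding cp by (simp add: prod_list_upt o_def)
  obtain T Ps Qs where sd: "schur_decomposition ?Qb ?es = (T, Ps, Qs)" by (cases "schur_decomposition ?Qb ?es") auto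
  from schur_decomposition[OF sl_carrier cp' sd]
  have wit: "similar_mat_wit ?Qb T Ps Qs" and ut: "upper_triangular T" and dg: "diag_mat T = ?es" by auto
  from wit have T: "T \<in> carrier_mat n n" and P: "Ps \<in> carrier_mat n n" and Q: "Qs \<in> carrier_mat n n"
    and PQ: "Ps * Qs = 1\<^sub>m n" and QP: "Qs * Ps = 1\<^sub>m n" and eq: "?Qb = Ps * T * Qs"
    unfolding similar_mat_wit_def Let_def by auto
  define T' where "T' = real t \<cdot>\<^sub>m T + ?c \<cdot>\<^sub>m 1\<^sub>m n"
  have T': "T' \<in> carrier_mat n n" unfolding T'_def using T by simp
  have "Ps * T' = Ps * (real t \<cdot>\<^sub>m T) + Ps * (?c \<cdot>\<^sub>m 1\<^sub>m n)"
    unfolding T'_def by (rule mult_add_distrib_mat[OF P]) (use T in auto)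
  then have "Ps * T' * Qs = (Ps * (real t \<cdot>\<^sub>m T) + Ps * (?c \<cdot>\<^sub>m 1\<^sub>m n)) * Qs" by simp
  also have "\<dots> = (real t \<cdot>\<^sub>m (Ps * T) + ?c \<cdot>\<^sub>m Ps) * Qs"
  proof -
    have "Ps * (?c \<cdot>\<^sub>m 1\<^sub>m n) = ?c \<cdot>\<^sub>m (Ps * 1\<^sub>m n)" by (rule mult_smult_distrib[OF P one_carrier_mat])
    also have "\<dots> = ?c \<cdot>\<^sub>m Ps" using P by simp
    finally show ?thesis using P T mult_smult_distrib[OF P T] by simp
  qed
  also have "\<dots> = real t \<cdot>\<^sub>m (Ps * T * Qs) + ?c \<cdot>\<^sub>m (Ps * Qs)"
    using P T Q by (simp add: add_mult_distrib_mat[of _ n n] mult_smult_assoc_mat[of _ n n])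
  also have "\<dots> = Bm t n E" unfolding Bm_def eq[symmetric] PQ ..
  finally have BmE: "Bm t n E = Ps * T' * Qs" by simp
  have sim: "similar_mat (Bm t n E) T'"
    by (rule similar_matI[of _ _ Ps Qs n]) (use BmE PQ QP P Q T' in auto)
  have utT': "upper_triangular T'" using ut T unfolding upper_triangular_def T'_def by auto
  have dT': "diag_mat T' = map (\<lambda>i. real t * qbar i + ?c) [0..<n]"
  proof -
    have "diag_mat T' = map (\<lambda>i. real t * T $$ (i,i) + ?c) [0..<n]"
      unfolding diag_mat_def T'_def using T by auto
    also have "\<dots> = map (\<lambda>i. real t * qbar i + ?c) [0..<n]"
    proof (rule map_cong[OF refl])
      fix i assume "i \<in> set [0..<n]"
      then have i: "i < n" by simp
      have "T $$ (i,i) = diag_mat T ! i" unfolding diag_mat_def using T i by simp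
      also have "\<dots> = qbar i" unfolding dg using i by simp
      finally show "real t * T $$ (i,i) + ?c = real t * qbar i + ?c" by simp
    qed
    finally show ?thesis .
  qed
  have "char_poly (Bm t n E) = char_poly T'" by (rule char_poly_similar[OF sim])
  also have "\<dots> = (\<Prod>a\<leftarrow>diag_mat T'. [:- a, 1:])" by (rule char_poly_upper_triangular[OF T' utT'])
  also have "\<dots> = (\<Prod>i<n. [:- (real t * qbar i + ?c), 1:])" unfolding dT' by (simp add: prod_list_upt o_def)
  finally show ?thesis .
qed




theorem theorem3:
  fixes n t :: nat and E :: "nat \<Rightarrow> nat \<Rightarrow> bool" and qbar :: "nat \<Rightarrow> real"
  assumes "simple_graph n E"
    and "t \<ge> 1"
    and "\<forall>i j. i \<le> j \<and> j < n \<longrightarrow> qbar j \<le> qbar i"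
    and "char_poly (signless_laplacian n (complement E)) = (\<Prod>i<n. [:- qbar i, 1:])"
  shows "char_poly (signless_laplacian (t * n) (complement (blowup t E))) =
           (\<Prod>i<n. [:- (real t * qbar i + 2 * (real t - 1)), 1:]) *
           (\<Prod>i<n. [:- (real t * real n - real t * real (degree n E i) - 2), 1:]) ^ (t - 1)"
proof -
  have irr: "\<forall>u<n. \<not> E u u" using assms(1) unfolding simple_graph_def by auto
  have t: "t > 0" using assms(2) by simp
  have "char_poly (signless_laplacian (t * n) (complement (blowup t E))) = char_poly (Mm t n E)"
    by (rule char_poly_similar[OF sim_QM[where n=n and E=E and t=t, OF irr t]])
  also have "\<dots> = char_poly (Bm t n E) * char_poly (Dm t n E)"
  proof (rule char_poly_0_block[OF Mm_def _ _ Bm_carrier zero_carrier_mat Dm_carrier])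
    show "\<exists>es. char_poly (Bm t n E) = (\<Prod>a\<leftarrow>es. [:- a, 1:])"
      by (rule exI[of _ "map (\<lambda>i. real t * qbar i + 2 * (real t - 1)) [0..<n]"])
         (simp add: cp_Bm[OF assms(4)] prod_list_upt o_def)
    show "\<exists>es. char_poly (Dm t n E) = (\<Prod>a\<leftarrow>es. [:- a, 1:])"
      by (rule exI[of _ "map (\<lambda>k. fD t n E (k mod n)) [0..<(t-1)*n]"])
         (simp add: cp_Dm prod_list_upt o_def)
  qed
  also have "\<dots> = (\<Prod>i<n. [:- (real t * qbar i + 2 * (real t - 1)), 1:]) *
           (\<Prod>u<n. [:- fD t n E u, 1:]) ^ (t - 1)"
    unfolding cp_Bm[OF assms(4)] cp_Dm prod_mod[of "\<lambda>u. [:- fD t n E u, 1:]"] ..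
  finally show ?thesis unfolding fD_def .
qed


end
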